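(* Let $\bar u\in\mathbb{R}^n_{\ge0}$, $\mathcal{X}=[0,\bar u]$, and let $f:\mathcal{X}\to\mathbb{R}$ be nonnegative and DR-submodular. Let $\mathcal{P}\subseteq\mathcal{X}$ be a nonempty compact down-closed convex set, $x^*\in\arg\max_{x\in\mathcal{P}}f(x)$, $x\in\mathcal{P}$, $z\in\mathcal{P}$ with $z\le \bar u-x$, and $z^*:=x\vee x^*-x$. Then $$f(x\vee x^* )+f(x\wedge x^* )+f(z\vee z^* )+f(z\wedge z^* )\ge f(x^* ).$$
   Context: Vector inequalities are componentwise; $\vee,\wedge$ are coordinatewise max/min. A set $\mathcal{P}\subseteq[0,\bar u]$ is down-closed if $x\in\mathcal{P}$ and $0\le y\le x$ imply $y\in\mathcal{P}$. $f$ is DR-submodular if for all $a\le b$ in $\mathcal{X}$, $i\in[n]$, $k\ge0$ with $a+ke_i,b+ke_i\in\mathcal{X}$, $f(a+ke_i)-f(a)\ge f(b+ke_i)-f(b)$ ($e_i$ the $i$-th standard basis vector). *)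

theory Defs
  imports "HOL-Analysis.Analysis"
begin

text \<open>Vectors in R^n are modelled as real^'n; the order is componentwise and
sup/inf are coordinatewise max/min (library instances). axis i 1 is e_i.\<close>

definition DR_submodular_on :: "(real^'n) set \<Rightarrow> (real^'n \<Rightarrow> real) \<Rightarrow> bool" where
  "DR_submodular_on X f \<longleftrightarrow>
     (\<forall>a\<in>X. \<forall>b\<in>X. \<forall>i. \<forall>k::real. a \<le> b \<and> k \<ge> 0 \<and>
        a + k *\<^sub>R axis i 1 \<in> X \<and> b + k *\<^sub>R axis i 1 \<in> X \<longrightarrow>
        f (a + k *\<^sub>R axis i 1) - f a \<ge> f (b + k *\<^sub>R axis i 1) - f b)"

definition down_closed :: "(real^'n) set \<Rightarrow> bool" where
  "down_closed P \<longleftrightarrow> (\<forall>x\<in>P. \<forall>y. 0 \<le> y \<and> y \<le> x \<longrightarrow> y \<in> P)"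

end

theory Submission
  imports Defs
begin

lemma DR_dir:
  fixes ubar a b d :: "real^'n" and f :: "real^'n \<Rightarrow> real"
  assumes DR: "DR_submodular_on {0..ubar} f"
    and a0: "0 \<le> a" and ab: "a \<le> b" and d0: "0 \<le> d" and bd: "b + d \<le> ubar"
  shows "f (a + d) - f a \<ge> f (b + d) - f b"
proof -
  define dS where "dS S = (\<chi> j. if j \<in> S then d$j else 0)" for S :: "'n set"
  have box: "\<And>S. a + dS S \<in> {0..ubar} \<and> b + dS S \<in> {0..ubar}"
  proof -
    fix S
    have "\<And>j. 0 \<le> a$j \<and> a$j \<le> b$j \<and> 0 \<le> d$j \<and> b$j + d$j \<le> ubar$j"
      using a0 ab d0 bd by (simp add: less_eq_vec_def sup_vec_def inf_vec_def inf_min sup_max)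
    then have "\<And>j. 0 \<le> a$j + dS S $ j \<and> a$j + dS S $ j \<le> ubar$j \<and> 0 \<le> b$j + dS S $ j \<and> b$j + dS S $ j \<le> ubar$j"
    proof -
      fix j
      have "0 \<le> dS S $ j \<and> dS S $ j \<le> d $ j" using d0 unfolding dS_def
        by (simp add: less_eq_vec_def)
      then show "0 \<le> a$j + dS S $ j \<and> a$j + dS S $ j \<le> ubar$j \<and> 0 \<le> b$j + dS S $ j \<and> b$j + dS S $ j \<le> ubar$j"
        using \<open>0 \<le> a$j \<and> a$j \<le> b$j \<and> 0 \<le> d$j \<and> b$j + d$j \<le> ubar$j\<close> by linarith
    qed
    then show "a + dS S \<in> {0..ubar} \<and> b + dS S \<in> {0..ubar}"
      by (auto simp add: less_eq_vec_def sup_vec_def inf_vec_def inf_min sup_max)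
  qed
  have "\<forall>S::'n set. f (a + dS S) - f a \<ge> f (b + dS S) - f b"
  proof
    fix S :: "'n set"
    have "finite S" by simp
    then show "f (a + dS S) - f a \<ge> f (b + dS S) - f b"
    proof (induction S rule: finite_induct)
      case empty
      have "dS {} = 0" unfolding dS_def by (simp add: vec_eq_iff sup_vec_def inf_vec_def inf_min sup_max)
      then show ?case by simp
    next
      case (insert i S)
      have eq: "dS (insert i S) = dS S + (d$i) *\<^sub>R axis i 1"
        using insert(2) unfolding dS_def by (auto simp: vec_eq_iff axis_def)
      have le: "a + dS S \<le> b + dS S" using ab by (simp add: less_eq_vec_def sup_vec_def inf_vec_def inf_min sup_max)
      have di: "d$i \<ge> 0" using d0 by (simp add: less_eq_vec_def sup_vec_def inf_vec_def inf_min sup_max)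
      have "f (a + dS S + (d$i) *\<^sub>R axis i 1) - f (a + dS S)
            \<ge> f (b + dS S + (d$i) *\<^sub>R axis i 1) - f (b + dS S)"
      proof -
        have DRx: "\<forall>a\<in>{0..ubar}. \<forall>b\<in>{0..ubar}. \<forall>i. \<forall>k::real. a \<le> b \<and> k \<ge> 0 \<and>
          a + k *\<^sub>R axis i 1 \<in> {0..ubar} \<and> b + k *\<^sub>R axis i 1 \<in> {0..ubar} \<longrightarrow>
          f (a + k *\<^sub>R axis i 1) - f a \<ge> f (b + k *\<^sub>R axis i 1) - f b"
          using DR unfolding DR_submodular_on_def by blast
        have m1: "a + dS S + (d$i) *\<^sub>R axis i 1 \<in> {0..ubar}"
          using box[of "insert i S"] unfolding eq by (simp add: add.assoc)
        have m2: "b + dS S + (d$i) *\<^sub>R axis i 1 \<in> {0..ubar}"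
          using box[of "insert i S"] unfolding eq by (simp add: add.assoc)
        show ?thesis
          using DRx[rule_format, of "a + dS S" "b + dS S" "d$i" i] box[of S] le di m1 m2 by blast
      qed
      then show ?case using insert(3) unfolding eq by (simp add: add.assoc)
    qed
  qed
  moreover have "dS UNIV = d" unfolding dS_def by (simp add: vec_eq_iff sup_vec_def inf_vec_def inf_min sup_max)
  ultimately show ?thesis by metis
qed

theorem claim1:
  fixes ubar :: "real^'n" and f :: "real^'n \<Rightarrow> real"
    and P :: "(real^'n) set" and x xstar z :: "real^'n"
  assumes "0 \<le> ubar"
    and "\<forall>y\<in>{0..ubar}. 0 \<le> f y"
    and "DR_submodular_on {0..ubar} f"
    and "P \<noteq> {}" and "P \<subseteq> {0..ubar}" and "compact P" and "down_closed P" and "convex P"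
    and "xstar \<in> P" and "\<forall>y\<in>P. f y \<le> f xstar"
    and "x \<in> P" and "z \<in> P" and "z \<le> ubar - x"
  shows "f (sup x xstar) + f (inf x xstar) + f (sup z (sup x xstar - x)) + f (inf z (sup x xstar - x))
           \<ge> f xstar"
proof -
  define zs where "zs = sup x xstar - x"
  define d2 where "d2 = sup z zs - zs"
  have x: "0 \<le> x" "x \<le> ubar" and xs: "0 \<le> xstar" "xstar \<le> ubar" and z: "0 \<le> z" "z \<le> ubar"
    using assms(5,9,11,12) by auto
  have zs0: "0 \<le> zs" unfolding zs_def by (simp add: less_eq_vec_def sup_vec_def inf_vec_def inf_min sup_max)
  have e1: "inf x xstar + zs = xstar" unfolding zs_def by (simp add: vec_eq_iff sup_vec_def inf_vec_def inf_min sup_max min_def max_def) 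
  have e2: "zs + x = sup x xstar" unfolding zs_def by simp
  have e3: "zs + d2 = sup z zs" unfolding d2_def by simp
  have top: "zs + x + d2 \<le> ubar"
  proof -
    have "\<And>j. x$j + z$j \<le> ubar$j \<and> max (x$j) (xstar$j) \<le> ubar$j"
    proof -
      fix j
      have "z$j \<le> ubar$j - x$j" "x$j \<le> ubar$j" "xstar$j \<le> ubar$j"
        using assms(13) x xs by (simp_all add: less_eq_vec_def)
      then show "x$j + z$j \<le> ubar$j \<and> max (x$j) (xstar$j) \<le> ubar$j" by simp
    qed
    then show ?thesis unfolding d2_def zs_def less_eq_vec_def
    proof (intro allI)
      fix i
      assume H: "\<And>j. x$j + z$j \<le> ubar$j \<and> max (x$j) (xstar$j) \<le> ubar$j"
      from H[of i] show "(sup x xstar - x + x + (sup z (sup x xstar - x) - (sup x xstar - x))) $ i \<le> ubar $ i"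
        by (auto simp: sup_vec_def sup_max max_def)
    qed
  qed
  have "f (0 + zs) - f 0 \<ge> f (inf x xstar + zs) - f (inf x xstar)"
    apply (rule DR_dir[OF assms(3)])
    using x xs zs0 e1 by (auto simp: less_eq_vec_def sup_vec_def inf_vec_def inf_min sup_max)
  hence A: "f xstar \<le> f (inf x xstar) + f zs - f 0" using e1 by simp
  have "f (zs + d2) - f zs \<ge> f (zs + x + d2) - f (zs + x)"
    apply (rule DR_dir[OF assms(3)])
    using x zs0 top unfolding d2_def by (auto simp: less_eq_vec_def sup_vec_def inf_vec_def inf_min sup_max)
  hence B: "f zs \<le> f (sup x xstar) + f (sup z zs) - f (zs + x + d2)" using e2 e3 by simp
  have n1: "0 \<le> f 0" using assms(1,2) by simp
  have n2: "0 \<le> f (zs + x + d2)"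
  proof -
    have eqq: "zs + x + d2 = x + sup z zs" unfolding d2_def by (simp add: algebra_simps)
    have "0 \<le> sup z zs" using z(1) by (simp add: le_supI1)
    then have "0 \<le> zs + x + d2" unfolding eqq using x(1) by (simp add: add_nonneg_nonneg)
    then show ?thesis using assms(2) top by simp
  qed
  have n3: "0 \<le> f (inf z zs)"
  proof -
    have "0 \<le> inf z zs" using z(1) zs0 by (rule le_infI)
    moreover have "inf z zs \<le> ubar" using z(2) by (rule le_infI1)
    ultimately show ?thesis using assms(2) by simp
  qed
  have "f xstar \<le> f (sup x xstar) + f (inf x xstar) + f (sup z zs) + f (inf z zs)"
    using A B n1 n2 n3 by linarith
  then show ?thesis unfolding zs_def .
qed

end
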